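(* Let $(\Omega,\mathcal{F},P)$ be a probability space, $\mathcal{X}$ a measurable space, $X:\Omega\to\mathcal{X}$ measurable, $u:\mathcal{X}\to\mathbb{R}$ measurable with $\mathbb{E}[u(X)]$ finite, and $\beta\ge 0$. Let $\mathbb{E}_\beta[u(X)]$ denote the unique $v\in\mathbb{R}$ with $\mathbb{E}[(u(X)-v)^+]=(1+\beta)\mathbb{E}[(v-u(X))^+]$. Let $$\mathcal{Q}_\beta=\left\{Q:\ Q\ll P,\ \frac{\mathrm{d}Q}{\mathrm{d}P}=\frac{1_{D^c}+(1+\beta)1_D}{1+\beta P(D)}\text{ for some }D\in\mathcal{F}\right\}.$$ Then $$\mathbb{E}_\beta[u(X)]=\min_{Q\in\mathcal{Q}_\beta}\mathbb{E}^Q[u(X)],$$ and the minimum is attained at $Q^*$ with $\dfrac{\mathrm{d}Q^*}{\mathrm{d}P}=\dfrac{1_{D_X^c}+(1+\beta)1_{D_X}}{1+\beta P(D_X)}$, where $D_X=\{\omega: u(X(\omega))<\mathbb{E}_\beta[u(X)]\}$.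
   Context: $s^+=\max\{s,0\}$; $\mathbb{E}^Q$ denotes expectation under $Q$. *)

theory Defs
  imports "HOL-Probability.Probability"
begin

definition expectile_beta :: "'a measure \<Rightarrow> real \<Rightarrow> ('a \<Rightarrow> real) \<Rightarrow> real" where
  "expectile_beta M \<beta> f =
     (THE v. (\<integral>\<omega>. max (f \<omega> - v) 0 \<partial>M) = (1 + \<beta>) * (\<integral>\<omega>. max (v - f \<omega>) 0 \<partial>M))"

definition dens_beta :: "'a measure \<Rightarrow> real \<Rightarrow> 'a set \<Rightarrow> 'a \<Rightarrow> real" where
  "dens_beta M \<beta> D \<omega> =
     (indicator (space M - D) \<omega> + (1 + \<beta>) * indicator D \<omega>) / (1 + \<beta> * measure M D)"

definition Q_of :: "'a measure \<Rightarrow> real \<Rightarrow> 'a set \<Rightarrow> 'a measure" where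
  "Q_of M \<beta> D = density M (\<lambda>\<omega>. ennreal (dens_beta M \<beta> D \<omega>))"

definition Q_beta :: "'a measure \<Rightarrow> real \<Rightarrow> 'a measure set" where
  "Q_beta M \<beta> = {Q_of M \<beta> D | D. D \<in> sets M}"

end

theory Submission imports Defs begin

context prob_space begin

lemma hpos_int:
  assumes f: "integrable M (f::'a\<Rightarrow>real)"
  shows "integrable M (\<lambda>\<omega>. max (v - f \<omega>) 0)" "integrable M (\<lambda>\<omega>. max (f \<omega> - v) 0)"
  using f by auto

lemma split_pos:
  assumes f: "integrable M (f::'a\<Rightarrow>real)"
  shows "(\<integral>\<omega>. max (f \<omega> - v) 0 \<partial>M) = expectation f - v + (\<integral>\<omega>. max (v - f \<omega>) 0 \<partial>M)"
proof -
  have "(\<integral>\<omega>. max (f \<omega> - v) 0 \<partial>M) = (\<integral>\<omega>. (f \<omega> - v) + max (v - f \<omega>) 0 \<partial>M)"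
    by (rule Bochner_Integration.integral_cong) auto
  also have "\<dots> = (\<integral>\<omega>. (f \<omega> - v) \<partial>M) + (\<integral>\<omega>. max (v - f \<omega>) 0 \<partial>M)"
    using f by (intro Bochner_Integration.integral_add) auto
  also have "(\<integral>\<omega>. (f \<omega> - v) \<partial>M) = expectation f - v"
    using f by (subst Bochner_Integration.integral_diff) (auto simp: prob_space)
  finally show ?thesis .
qed

lemma h_mono:
  assumes f: "integrable M (f::'a\<Rightarrow>real)" and "v \<le> w"
  shows "(\<integral>\<omega>. max (v - f \<omega>) 0 \<partial>M) \<le> (\<integral>\<omega>. max (w - f \<omega>) 0 \<partial>M)"
    "(\<integral>\<omega>. max (w - f \<omega>) 0 \<partial>M) \<le> (\<integral>\<omega>. max (v - f \<omega>) 0 \<partial>M) + (w - v)"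
proof -
  show "(\<integral>\<omega>. max (v - f \<omega>) 0 \<partial>M) \<le> (\<integral>\<omega>. max (w - f \<omega>) 0 \<partial>M)"
    using f assms(2) by (intro integral_mono) auto
  have "(\<integral>\<omega>. max (w - f \<omega>) 0 \<partial>M) \<le> (\<integral>\<omega>. max (v - f \<omega>) 0 + (w - v) \<partial>M)"
    using f assms(2) by (intro integral_mono) auto
  also have "\<dots> = (\<integral>\<omega>. max (v - f \<omega>) 0 \<partial>M) + (w - v)"
    using f by (subst Bochner_Integration.integral_add) (auto simp: prob_space)
  finally show "(\<integral>\<omega>. max (w - f \<omega>) 0 \<partial>M) \<le> (\<integral>\<omega>. max (v - f \<omega>) 0 \<partial>M) + (w - v)" .
qed

lemma h_cont:
  assumes f: "integrable M (f::'a\<Rightarrow>real)"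
  shows "continuous_on UNIV (\<lambda>v. \<integral>\<omega>. max (v - f \<omega>) 0 \<partial>M)"
proof (rule lipschitz_on_continuous_on)
  show "1-lipschitz_on UNIV (\<lambda>v. \<integral>\<omega>. max (v - f \<omega>) 0 \<partial>M)"
  proof (rule lipschitz_onI)
    fix x y :: real
    show "dist (\<integral>\<omega>. max (x - f \<omega>) 0 \<partial>M) (\<integral>\<omega>. max (y - f \<omega>) 0 \<partial>M) \<le> 1 * dist x y"
    proof (cases "x \<le> y")
      case True
      then show ?thesis using h_mono[OF f True] by (auto simp: dist_real_def)
    next
      case False
      then have yx: "y \<le> x" by simp
      then show ?thesis using h_mono[OF f yx] by (auto simp: dist_real_def)
    qed
  qed simp
qed

lemma root_exists:
  assumes f: "integrable M (f::'a\<Rightarrow>real)" and b: "\<beta> \<ge> 0"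
  shows "\<exists>!v. (\<integral>\<omega>. max (f \<omega> - v) 0 \<partial>M) = (1 + \<beta>) * (\<integral>\<omega>. max (v - f \<omega>) 0 \<partial>M)"
proof -
  define h where "h v = (\<integral>\<omega>. max (v - f \<omega>) 0 \<partial>M)" for v
  define g where "g v = expectation f - v - \<beta> * h v" for v
  have eq: "(\<integral>\<omega>. max (f \<omega> - v) 0 \<partial>M) = (1 + \<beta>) * (\<integral>\<omega>. max (v - f \<omega>) 0 \<partial>M) \<longleftrightarrow> g v = 0" for v
    unfolding g_def h_def split_pos[OF f] by (auto simp: algebra_simps)
  have hnn: "h v \<ge> 0" for v unfolding h_def by (rule integral_nonneg_AE) auto
  define c where "c = h (expectation f)"
  define v1 where "v1 = expectation f - \<beta> * c"
  have "v1 \<le> expectation f" unfolding v1_def c_def using hnn b by simp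
  have "h v1 \<le> c" unfolding c_def h_def by (rule h_mono(1)[OF f \<open>v1 \<le> expectation f\<close>])
  then have g1: "g v1 \<ge> 0" unfolding g_def v1_def using b by (simp add: mult_left_mono)
  have g2: "g (expectation f) \<le> 0" unfolding g_def using hnn b by simp
  have "continuous_on UNIV h" unfolding h_def by (rule h_cont[OF f])
  then have "continuous_on {v1..expectation f} g"
    unfolding g_def by (auto intro!: continuous_intros elim: continuous_on_subset)
  from IVT2'[of g "expectation f" 0 v1, OF g2 g1 \<open>v1 \<le> expectation f\<close> this]
  obtain v where "g v = 0" by auto
  moreover have "x = y" if "g x = 0" "g y = 0" for x y
  proof (rule ccontr)
    assume "x \<noteq> y"
    have *: "g b' < g a'" if "a' < b'" for a' b'
    proof -
      have "h a' \<le> h b'" unfolding h_def using that by (intro h_mono(1)[OF f]) simp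
      then show ?thesis unfolding g_def using that b by (smt (verit) mult_left_mono)
    qed
    from \<open>x \<noteq> y\<close> show False using *[of x y] *[of y x] that by linarith
  qed
  ultimately show ?thesis unfolding eq by blast
qed


lemma Q_int:
  assumes f: "integrable M (f::'a\<Rightarrow>real)" and b: "\<beta> \<ge> 0" and D: "D \<in> sets M"
  shows "integrable (Q_of M \<beta> D) f \<and> (\<integral>\<omega>. f \<omega> \<partial>(Q_of M \<beta> D))
     = (expectation f + \<beta> * (\<integral>\<omega>. indicator D \<omega> * f \<omega> \<partial>M)) / (1 + \<beta> * prob D)"
proof -
  have fm[measurable]: "f \<in> borel_measurable M" using f by auto
  have Dm[measurable]: "D \<in> sets M" by fact
  have pos: "1 + \<beta> * prob D > 0" using b by (smt (verit) measure_nonneg mult_nonneg_nonneg)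
  have dm: "dens_beta M \<beta> D \<in> borel_measurable M" unfolding dens_beta_def by measurable
  have dnn: "AE x in M. 0 \<le> dens_beta M \<beta> D x" using pos b
    unfolding dens_beta_def by (auto intro!: divide_nonneg_pos simp: indicator_def)
  have pw: "dens_beta M \<beta> D x *\<^sub>R f x = (f x + \<beta> * (indicator D x * f x)) / (1 + \<beta> * prob D)"
    if "x \<in> space M" for x
    using that unfolding dens_beta_def by (auto simp: indicator_def field_simps)
  have i1: "integrable M (\<lambda>x. indicator D x * f x)"
    using integrable_mult_indicator[OF D f] by simp
  have i2: "integrable M (\<lambda>x. (f x + \<beta> * (indicator D x * f x)) / (1 + \<beta> * prob D))"
    using f i1 by auto
  have I: "integrable (Q_of M \<beta> D) f"
    unfolding Q_of_def
    apply (subst integrable_density[OF fm dm dnn])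
    using i2 by (rule Bochner_Integration.integrable_cong[THEN iffD1, rotated -1]) (auto simp: pw[simplified])
  have "(\<integral>\<omega>. f \<omega> \<partial>(Q_of M \<beta> D)) = (\<integral>x. (f x + \<beta> * (indicator D x * f x)) / (1 + \<beta> * prob D) \<partial>M)"
    unfolding Q_of_def
    apply (subst integral_density[OF fm dm dnn])
    by (rule Bochner_Integration.integral_cong) (auto simp: pw[simplified])
  also have "\<dots> = (expectation f + \<beta> * (\<integral>\<omega>. indicator D \<omega> * f \<omega> \<partial>M)) / (1 + \<beta> * prob D)"
    using f i1 by (simp add: Bochner_Integration.integral_add)
  finally show ?thesis using I by blast
qed

lemma ind_diff:
  assumes f: "integrable M (f::'a\<Rightarrow>real)" and D: "D \<in> sets M"
  shows "(\<integral>x. indicator D x * (e - f x) \<partial>M) = e * prob D - (\<integral>x. indicator D x * f x \<partial>M)"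
proof -
  have i1: "integrable M (\<lambda>x. indicator D x * f x)"
    using integrable_mult_indicator[OF D f] by simp
  have i0: "integrable M (\<lambda>x. e * indicator D x)"
    using D by (intro integrable_mult_right) (auto simp: emeasure_eq_measure)
  have "(\<integral>x. indicator D x * (e - f x) \<partial>M) = (\<integral>x. e * indicator D x - indicator D x * f x \<partial>M)"
    by (rule Bochner_Integration.integral_cong) (auto simp: algebra_simps)
  also have "\<dots> = e * prob D - (\<integral>x. indicator D x * f x \<partial>M)"
    using i0 i1 D by (simp add: Bochner_Integration.integral_diff Int_absorb2 sets.sets_into_space)
  finally show ?thesis .
qed

end

theorem theorem3:
  fixes M :: "'a measure" and N :: "'b measure"
    and X :: "'a \<Rightarrow> 'b" and u :: "'b \<Rightarrow> real" and \<beta> :: real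
  assumes "prob_space M"
    and "X \<in> measurable M N"
    and "u \<in> borel_measurable N"
    and "integrable M (\<lambda>\<omega>. u (X \<omega>))"
    and "\<beta> \<ge> 0"
  shows "(\<exists>!v. (\<integral>\<omega>. max (u (X \<omega>) - v) 0 \<partial>M)
                 = (1 + \<beta>) * (\<integral>\<omega>. max (v - u (X \<omega>)) 0 \<partial>M))
    \<and> (let e = expectile_beta M \<beta> (\<lambda>\<omega>. u (X \<omega>));
           D\<^sub>X = {\<omega> \<in> space M. u (X \<omega>) < e}
       in Q_of M \<beta> D\<^sub>X \<in> Q_beta M \<beta>
          \<and> integrable (Q_of M \<beta> D\<^sub>X) (\<lambda>\<omega>. u (X \<omega>))
          \<and> e = (\<integral>\<omega>. u (X \<omega>) \<partial>(Q_of M \<beta> D\<^sub>X))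
          \<and> (\<forall>Q \<in> Q_beta M \<beta>. integrable Q (\<lambda>\<omega>. u (X \<omega>))
                 \<and> e \<le> (\<integral>\<omega>. u (X \<omega>) \<partial>Q)))"
proof -
  interpret P: prob_space M by fact
  define f where "f = (\<lambda>\<omega>. u (X \<omega>))"
  have f: "integrable M f" unfolding f_def by fact
  have fm[measurable]: "f \<in> borel_measurable M" using f by auto
  have b: "\<beta> \<ge> 0" by fact
  note ex = P.root_exists[OF f b]
  define e where "e = expectile_beta M \<beta> f"
  have root: "(\<integral>\<omega>. max (f \<omega> - e) 0 \<partial>M) = (1 + \<beta>) * (\<integral>\<omega>. max (e - f \<omega>) 0 \<partial>M)"
    unfolding e_def expectile_beta_def by (rule theI'[OF ex])
  then have key: "P.expectation f - e = \<beta> * (\<integral>\<omega>. max (e - f \<omega>) 0 \<partial>M)"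
    unfolding P.split_pos[OF f] by (simp add: algebra_simps)
  define DX where "DX = {\<omega> \<in> space M. f \<omega> < e}"
  have DXm: "DX \<in> sets M" unfolding DX_def by measurable
  have pos: "1 + \<beta> * P.prob D > 0" for D using b by (smt (verit) measure_nonneg mult_nonneg_nonneg)
  have low: "e \<le> (\<integral>\<omega>. f \<omega> \<partial>(Q_of M \<beta> D))" if D: "D \<in> sets M" for D
  proof -
    have "(\<integral>x. indicator D x * (e - f x) \<partial>M) \<le> (\<integral>\<omega>. max (e - f \<omega>) 0 \<partial>M)"
      using f D integrable_mult_indicator[OF D, of "\<lambda>x. e - f x"]
      by (intro integral_mono) (auto simp: indicator_def)
    then have "\<beta> * (e * P.prob D - (\<integral>x. indicator D x * f x \<partial>M)) \<le> P.expectation f - e"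
      unfolding key P.ind_diff[OF f D] using b by (simp add: mult_left_mono)
    then have "e * (1 + \<beta> * P.prob D) \<le> P.expectation f + \<beta> * (\<integral>x. indicator D x * f x \<partial>M)"
      by (simp add: algebra_simps)
    then show ?thesis using P.Q_int[OF f b D] pos[of D] by (simp add: pos_le_divide_eq)
  qed
  have eqX: "e = (\<integral>\<omega>. f \<omega> \<partial>(Q_of M \<beta> DX))"
  proof -
    have "(\<integral>x. indicator DX x * (e - f x) \<partial>M) = (\<integral>\<omega>. max (e - f \<omega>) 0 \<partial>M)"
      by (rule Bochner_Integration.integral_cong) (auto simp: indicator_def DX_def)
    then have "\<beta> * (e * P.prob DX - (\<integral>x. indicator DX x * f x \<partial>M)) = P.expectation f - e"
      unfolding key P.ind_diff[OF f DXm] by simp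
    then have "e * (1 + \<beta> * P.prob DX) = P.expectation f + \<beta> * (\<integral>x. indicator DX x * f x \<partial>M)"
      by (simp add: algebra_simps)
    then have "e * (1 + \<beta> * P.prob DX) = (\<integral>\<omega>. f \<omega> \<partial>(Q_of M \<beta> DX)) * (1 + \<beta> * P.prob DX)"
      using P.Q_int[OF f b DXm] pos[of DX] by simp
    then show ?thesis using pos[of DX] by simp
  qed
  have main: "(\<exists>!v. (\<integral>\<omega>. max (f \<omega> - v) 0 \<partial>M) = (1 + \<beta>) * (\<integral>\<omega>. max (v - f \<omega>) 0 \<partial>M))
     \<and> Q_of M \<beta> DX \<in> Q_beta M \<beta> \<and> integrable (Q_of M \<beta> DX) f
     \<and> e = (\<integral>\<omega>. f \<omega> \<partial>(Q_of M \<beta> DX))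
     \<and> (\<forall>Q \<in> Q_beta M \<beta>. integrable Q f \<and> e \<le> (\<integral>\<omega>. f \<omega> \<partial>Q))"
  proof (intro conjI ballI)
    show "\<exists>!v. (\<integral>\<omega>. max (f \<omega> - v) 0 \<partial>M) = (1 + \<beta>) * (\<integral>\<omega>. max (v - f \<omega>) 0 \<partial>M)" by (rule ex)
    show "Q_of M \<beta> DX \<in> Q_beta M \<beta>" unfolding Q_beta_def using DXm by blast
    show "integrable (Q_of M \<beta> DX) f" using P.Q_int[OF f b DXm] by blast
    show "e = (\<integral>\<omega>. f \<omega> \<partial>(Q_of M \<beta> DX))" by (rule eqX)
    fix Q assume "Q \<in> Q_beta M \<beta>"
    then obtain D where D: "D \<in> sets M" and Q: "Q = Q_of M \<beta> D" unfolding Q_beta_def by blast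
    show "integrable Q f" using P.Q_int[OF f b D] Q by blast
    show "e \<le> (\<integral>\<omega>. f \<omega> \<partial>Q)" using low[OF D] Q by simp
  qed
  then show ?thesis unfolding Let_def e_def DX_def f_def .
qed

end
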